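(* Let $(G,J)$ be a simply-connected, non-abelian, $2$-step nilpotent Lie group equipped with a left-invariant complex structure $J$. Assume that the Lie algebra $(\mathfrak g,\mu)$ of $G$ is such that $J\mu(\mathfrak g,\mathfrak g)$ is contained in the center of $\mathfrak g$. Then there are no left-invariant $HCF_+$ static metrics on $(G,J)$, i.e. there is no left-invariant Hermitian metric $g$ with $\Theta(g)=c\,g$ for some $c\in\mathbb R$.
   Context: For a Hermitian metric $g$ with Chern connection $\nabla$ (curvature $\Omega$, torsion $T$, $T_{js\bar p}=g_{l\bar p}T^l_{js}$), $S(g)_{j\bar k}=g^{\bar rs}\Omega_{s\bar rj\bar k}$, $Q^2(g)_{j\bar k}=g^{\bar pq}g^{\bar rs}T_{sq\bar k}T_{\overline{rp}j}$, and $\Theta(g)=S(g)+\frac12Q^2(g)$. *)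

theory Defs
  imports "HOL-Analysis.Analysis"
begin

text \<open>Left-invariant data on a Lie group are encoded on its Lie algebra
  g = real^'n.  Complexification g (x) C = complex^'n.\<close>

definition cx :: "real^'n \<Rightarrow> complex^'n" where
  "cx x = (\<chi> i. complex_of_real (x $ i))"

definition vre :: "complex^'n \<Rightarrow> real^'n" where
  "vre v = (\<chi> i. Re (v $ i))"

definition vim :: "complex^'n \<Rightarrow> real^'n" where
  "vim v = (\<chi> i. Im (v $ i))"

definition vcnj :: "complex^'n \<Rightarrow> complex^'n" where
  "vcnj v = (\<chi> i. cnj (v $ i))"

definition cext1 :: "(real^'n \<Rightarrow> real^'n) \<Rightarrow> complex^'n \<Rightarrow> complex^'n" where
  "cext1 A v = cx (A (vre v)) + \<i> *s cx (A (vim v))"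

definition cext2 :: "(real^'n \<Rightarrow> real^'n \<Rightarrow> real^'n) \<Rightarrow> complex^'n \<Rightarrow> complex^'n \<Rightarrow> complex^'n" where
  "cext2 B u v = cx (B (vre u) (vre v)) - cx (B (vim u) (vim v))
      + \<i> *s (cx (B (vre u) (vim v)) + cx (B (vim u) (vre v)))"

definition cform :: "(real^'n \<Rightarrow> real^'n \<Rightarrow> real) \<Rightarrow> complex^'n \<Rightarrow> complex^'n \<Rightarrow> complex" where
  "cform B u v = complex_of_real (B (vre u) (vre v)) - complex_of_real (B (vim u) (vim v))
      + \<i> * (complex_of_real (B (vre u) (vim v)) + complex_of_real (B (vim u) (vre v)))"

definition lie_algebra :: "(real^'n \<Rightarrow> real^'n \<Rightarrow> real^'n) \<Rightarrow> bool" where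
  "lie_algebra \<mu> \<longleftrightarrow> bilinear \<mu> \<and> (\<forall>x. \<mu> x x = 0) \<and>
     (\<forall>x y z. \<mu> x (\<mu> y z) + \<mu> y (\<mu> z x) + \<mu> z (\<mu> x y) = 0)"

definition center :: "(real^'n \<Rightarrow> real^'n \<Rightarrow> real^'n) \<Rightarrow> (real^'n) set" where
  "center \<mu> = {z. \<forall>x. \<mu> z x = 0}"

definition two_step_nilpotent :: "(real^'n \<Rightarrow> real^'n \<Rightarrow> real^'n) \<Rightarrow> bool" where
  "two_step_nilpotent \<mu> \<longleftrightarrow> (\<forall>x y z. \<mu> (\<mu> x y) z = 0) \<and> (\<exists>x y. \<mu> x y \<noteq> 0)"

definition complex_structure :: "(real^'n \<Rightarrow> real^'n) \<Rightarrow> bool" where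
  "complex_structure J \<longleftrightarrow> linear J \<and> (\<forall>x. J (J x) = - x)"

definition integrable_cs :: "(real^'n \<Rightarrow> real^'n) \<Rightarrow> (real^'n \<Rightarrow> real^'n \<Rightarrow> real^'n) \<Rightarrow> bool" where
  "integrable_cs J \<mu> \<longleftrightarrow>
     (\<forall>x y. \<mu> (J x) (J y) - J (\<mu> (J x) y) - J (\<mu> x (J y)) - \<mu> x y = 0)"

definition hermitian_metric :: "(real^'n \<Rightarrow> real^'n) \<Rightarrow> (real^'n \<Rightarrow> real^'n \<Rightarrow> real) \<Rightarrow> bool" where
  "hermitian_metric J g \<longleftrightarrow> bilinear g \<and> (\<forall>x y. g x y = g y x) \<and>
     (\<forall>x. x \<noteq> 0 \<longrightarrow> g x x > 0) \<and> (\<forall>x y. g (J x) (J y) = g x y)"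

definition T10 :: "(real^'n \<Rightarrow> real^'n) \<Rightarrow> (complex^'n) set" where
  "T10 J = {Z. cext1 J Z = \<i> *s Z}"

text \<open>Left-invariant connection: nabla_x y = L x y. Torsion and curvature (complexified).\<close>
definition torC :: "(real^'n \<Rightarrow> real^'n \<Rightarrow> real^'n) \<Rightarrow> (real^'n \<Rightarrow> real^'n \<Rightarrow> real^'n)
     \<Rightarrow> complex^'n \<Rightarrow> complex^'n \<Rightarrow> complex^'n" where
  "torC L \<mu> X Y = cext2 L X Y - cext2 L Y X - cext2 \<mu> X Y"

definition curvC :: "(real^'n \<Rightarrow> real^'n \<Rightarrow> real^'n) \<Rightarrow> (real^'n \<Rightarrow> real^'n \<Rightarrow> real^'n)
     \<Rightarrow> complex^'n \<Rightarrow> complex^'n \<Rightarrow> complex^'n \<Rightarrow> complex^'n" where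
  "curvC L \<mu> X Y Z = cext2 L X (cext2 L Y Z) - cext2 L Y (cext2 L X Z) - cext2 L (cext2 \<mu> X Y) Z"

definition chern_connection :: "(real^'n \<Rightarrow> real^'n) \<Rightarrow> (real^'n \<Rightarrow> real^'n \<Rightarrow> real^'n)
     \<Rightarrow> (real^'n \<Rightarrow> real^'n \<Rightarrow> real) \<Rightarrow> (real^'n \<Rightarrow> real^'n \<Rightarrow> real^'n) \<Rightarrow> bool" where
  "chern_connection J \<mu> g L \<longleftrightarrow> bilinear L \<and>
     (\<forall>x y z. g (L x y) z + g y (L x z) = 0) \<and>
     (\<forall>x y. L x (J y) = J (L x y)) \<and>
     (\<forall>Z\<in>T10 J. \<forall>W\<in>T10 J. torC L \<mu> Z (vcnj W) = 0)"

definition unitary_frame :: "(real^'n \<Rightarrow> real^'n) \<Rightarrow> (real^'n \<Rightarrow> real^'n \<Rightarrow> real)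
     \<Rightarrow> nat \<Rightarrow> (nat \<Rightarrow> complex^'n) \<Rightarrow> bool" where
  "unitary_frame J g m F \<longleftrightarrow> 2 * m = CARD('n) \<and> (\<forall>s<m. F s \<in> T10 J) \<and>
     (\<forall>s<m. \<forall>r<m. cform g (F s) (vcnj (F r)) = (if s = r then 1 else 0))"

text \<open>In a unitary frame g^{r-bar s} = delta, so
  S(X,Ybar) = sum_s Omega(Z_s, Zbar_s, X, Ybar),
  Q^2(X,Ybar) = sum_{s,q} T(Z_s,Z_q,Ybar) T(Zbar_s,Zbar_q,X).\<close>
definition chern_S where
  "chern_S g L \<mu> m F X Y =
     (\<Sum>s<m. cform g (curvC L \<mu> (F s) (vcnj (F s)) X) (vcnj Y))"

definition chern_Q2 where
  "chern_Q2 g L \<mu> m F X Y =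
     (\<Sum>s<m. \<Sum>q<m. cform g (torC L \<mu> (F s) (F q)) (vcnj Y)
                     * cform g (torC L \<mu> (vcnj (F s)) (vcnj (F q))) X)"

definition Theta where
  "Theta g L \<mu> m F X Y = chern_S g L \<mu> m F X Y + chern_Q2 g L \<mu> m F X Y / 2"

definition hcf_plus_static :: "(real^'n \<Rightarrow> real^'n) \<Rightarrow> (real^'n \<Rightarrow> real^'n \<Rightarrow> real^'n)
     \<Rightarrow> (real^'n \<Rightarrow> real^'n \<Rightarrow> real) \<Rightarrow> bool" where
  "hcf_plus_static J \<mu> g \<longleftrightarrow> hermitian_metric J g \<and>
     (\<exists>L m F (c::real). chern_connection J \<mu> g L \<and> unitary_frame J g m F \<and>
        (\<forall>X\<in>T10 J. \<forall>Y\<in>T10 J.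
            Theta g L \<mu> m F X Y = complex_of_real c * cform g X (vcnj Y)))"

end

theory Submission
  imports Defs
begin

lemma vre_cx[simp]: "vre (cx x) = x" by (simp add: vre_def cx_def)
lemma vim_cx[simp]: "vim (cx x) = 0" by (simp add: vim_def cx_def vec_eq_iff)
lemma vre_add[simp]: "vre (U + W) = vre U + vre W" by (simp add: vre_def vec_eq_iff)
lemma vim_add[simp]: "vim (U + W) = vim U + vim W" by (simp add: vim_def vec_eq_iff)
lemma vre_diff[simp]: "vre (U - W) = vre U - vre W" by (simp add: vre_def vec_eq_iff)
lemma vim_diff[simp]: "vim (U - W) = vim U - vim W" by (simp add: vim_def vec_eq_iff)
lemma vre_neg[simp]: "vre (- U) = - vre U" by (simp add: vre_def vec_eq_iff)
lemma vim_neg[simp]: "vim (- U) = - vim U" by (simp add: vim_def vec_eq_iff)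
lemma vre_zero[simp]: "vre 0 = 0" by (simp add: vre_def vec_eq_iff)
lemma vim_zero[simp]: "vim 0 = 0" by (simp add: vim_def vec_eq_iff)
lemma vre_smult[simp]: "vre (a *s U) = Re a *\<^sub>R vre U - Im a *\<^sub>R vim U"
  by (simp add: vre_def vim_def vec_eq_iff vector_scalar_mult_def)
lemma vim_smult[simp]: "vim (a *s U) = Im a *\<^sub>R vre U + Re a *\<^sub>R vim U"
  by (simp add: vre_def vim_def vec_eq_iff vector_scalar_mult_def)
lemma vre_vcnj[simp]: "vre (vcnj U) = vre U" by (simp add: vre_def vcnj_def)
lemma vim_vcnj[simp]: "vim (vcnj U) = - vim U" by (simp add: vim_def vcnj_def vec_eq_iff)
lemma vre_sum[simp]: "vre (sum f A) = (\<Sum>a\<in>A. vre (f a))"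
  by (induction A rule: infinite_finite_induct) auto
lemma vim_sum[simp]: "vim (sum f A) = (\<Sum>a\<in>A. vim (f a))"
  by (induction A rule: infinite_finite_induct) auto
lemma cvec_eq: "U = W \<longleftrightarrow> vre U = vre W \<and> vim U = vim W"
  by (auto simp: vre_def vim_def vec_eq_iff complex_eq_iff)
lemma Re_cform[simp]: "Re (cform B U W) = B (vre U) (vre W) - B (vim U) (vim W)"
  by (simp add: cform_def)
lemma Im_cform[simp]: "Im (cform B U W) = B (vre U) (vim W) + B (vim U) (vre W)"
  by (simp add: cform_def)
lemma vre_cext1[simp]: "vre (cext1 A U) = A (vre U)" by (simp add: cext1_def)
lemma vim_cext1[simp]: "vim (cext1 A U) = A (vim U)" by (simp add: cext1_def)
lemma vre_cext2[simp]: "vre (cext2 B U W) = B (vre U) (vre W) - B (vim U) (vim W)"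
  by (simp add: cext2_def)
lemma vim_cext2[simp]: "vim (cext2 B U W) = B (vre U) (vim W) + B (vim U) (vre W)"
  by (simp add: cext2_def)

lemma vcnj_add[simp]: "vcnj (U + W) = vcnj U + vcnj W" by (simp add: cvec_eq)
lemma vcnj_diff[simp]: "vcnj (U - W) = vcnj U - vcnj W" by (simp add: cvec_eq)
lemma vcnj_neg[simp]: "vcnj (- U) = - vcnj U" by (simp add: cvec_eq)
lemma vcnj_zero[simp]: "vcnj 0 = 0" by (simp add: cvec_eq)
lemma vcnj_smult[simp]: "vcnj (a *s U) = cnj a *s vcnj U" by (simp add: cvec_eq)
lemma vcnj_vcnj[simp]: "vcnj (vcnj U) = U" by (simp add: cvec_eq)
lemma vcnj_cx[simp]: "vcnj (cx x) = cx x" by (simp add: cvec_eq)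
lemma vcnj_sum[simp]: "vcnj (sum f A) = (\<Sum>a\<in>A. vcnj (f a))" by (simp add: cvec_eq sum_negf)
lemma vcnj_eq_iff[simp]: "vcnj U = vcnj W \<longleftrightarrow> U = W" by (metis vcnj_vcnj)
lemma vcnj_eq0[simp]: "vcnj U = 0 \<longleftrightarrow> U = 0" by (metis vcnj_vcnj vcnj_zero)

lemma smult_add_l: "(a + b) *s (U::complex^'n) = a *s U + b *s U" by (simp add: cvec_eq algebra_simps)
lemma smult_add_r: "a *s ((U::complex^'n) + W) = a *s U + a *s W" by (simp add: cvec_eq algebra_simps)
lemma smult_diff_r: "a *s ((U::complex^'n) - W) = a *s U - a *s W" by (simp add: cvec_eq algebra_simps)
lemma smult_smult[simp]: "a *s (b *s (U::complex^'n)) = (a * b) *s U" by (simp add: cvec_eq algebra_simps)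
lemma smult_one[simp]: "1 *s (U::complex^'n) = U" by (simp add: cvec_eq algebra_simps)
lemma smult_zero[simp]: "a *s (0::complex^'n) = 0" by (simp add: cvec_eq algebra_simps)
lemma zero_smult[simp]: "0 *s (U::complex^'n) = 0" by (simp add: cvec_eq algebra_simps)
lemma smult_sum: "a *s (sum f A) = (\<Sum>x\<in>A. a *s (f x :: complex^'n))"
  by (induction A rule: infinite_finite_induct) (auto simp: smult_add_r)

context fixes B :: "real^'n \<Rightarrow> real^'n \<Rightarrow> real^'n" assumes bB: "bilinear B"
begin
lemmas bls = bilinear_ladd[OF bB] bilinear_radd[OF bB] bilinear_lmul[OF bB] bilinear_rmul[OF bB]
  bilinear_lneg[OF bB] bilinear_rneg[OF bB] bilinear_lsub[OF bB] bilinear_rsub[OF bB]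
  bilinear_lzero[OF bB] bilinear_rzero[OF bB]
lemma cext2_ladd: "cext2 B (U + V) W = cext2 B U W + cext2 B V W"
  by (simp add: cvec_eq bls algebra_simps)
lemma cext2_radd: "cext2 B W (U + V) = cext2 B W U + cext2 B W V"
  by (simp add: cvec_eq bls algebra_simps)
lemma cext2_lsub: "cext2 B (U - V) W = cext2 B U W - cext2 B V W"
  by (simp add: cvec_eq bls algebra_simps)
lemma cext2_rsub: "cext2 B W (U - V) = cext2 B W U - cext2 B W V"
  by (simp add: cvec_eq bls algebra_simps)
lemma cext2_lneg: "cext2 B (- U) W = - cext2 B U W"
  by (simp add: cvec_eq bls algebra_simps)
lemma cext2_rneg: "cext2 B W (- U) = - cext2 B W U"
  by (simp add: cvec_eq bls algebra_simps)
lemma cext2_lzero: "cext2 B 0 W = 0"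
  by (simp add: cvec_eq bls algebra_simps)
lemma cext2_rzero: "cext2 B W 0 = 0"
  by (simp add: cvec_eq bls algebra_simps)
lemma cext2_lsmult: "cext2 B (a *s U) W = a *s cext2 B U W"
  by (simp add: cvec_eq bls algebra_simps)
lemma cext2_rsmult: "cext2 B W (a *s U) = a *s cext2 B W U"
  by (simp add: cvec_eq bls algebra_simps)
lemma cext2_vcnj: "vcnj (cext2 B U W) = cext2 B (vcnj U) (vcnj W)"
  by (simp add: cvec_eq bls algebra_simps)
lemma cext2_cx: "cext2 B (cx x) (cx y) = cx (B x y)"
  by (simp add: cvec_eq bls algebra_simps)
lemma cext2_lsum: "cext2 B (sum f A) W = (\<Sum>a\<in>A. cext2 B (f a) W)"
  by (induction A rule: infinite_finite_induct) (auto simp: cext2_lzero cext2_ladd)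
lemma cext2_rsum: "cext2 B W (sum f A) = (\<Sum>a\<in>A. cext2 B W (f a))"
  by (induction A rule: infinite_finite_induct) (auto simp: cext2_rzero cext2_radd)
lemmas cext2_simps = cext2_ladd cext2_radd cext2_lsub cext2_rsub cext2_lneg cext2_rneg
  cext2_lzero cext2_rzero cext2_lsmult cext2_rsmult cext2_lsum cext2_rsum
end

context fixes B :: "real^'n \<Rightarrow> real^'n \<Rightarrow> real" assumes bB: "bilinear B"
begin
lemmas blf = bilinear_ladd[OF bB] bilinear_radd[OF bB] bilinear_lmul[OF bB] bilinear_rmul[OF bB]
  bilinear_lneg[OF bB] bilinear_rneg[OF bB] bilinear_lsub[OF bB] bilinear_rsub[OF bB]
  bilinear_lzero[OF bB] bilinear_rzero[OF bB]
lemma cform_ladd: "cform B (U + V) W = cform B U W + cform B V W"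
  by (simp add: complex_eq_iff blf algebra_simps)
lemma cform_radd: "cform B W (U + V) = cform B W U + cform B W V"
  by (simp add: complex_eq_iff blf algebra_simps)
lemma cform_lsub: "cform B (U - V) W = cform B U W - cform B V W"
  by (simp add: complex_eq_iff blf algebra_simps)
lemma cform_rsub: "cform B W (U - V) = cform B W U - cform B W V"
  by (simp add: complex_eq_iff blf algebra_simps)
lemma cform_lneg: "cform B (- U) W = - cform B U W"
  by (simp add: complex_eq_iff blf algebra_simps)
lemma cform_rneg: "cform B W (- U) = - cform B W U"
  by (simp add: complex_eq_iff blf algebra_simps)
lemma cform_lzero: "cform B 0 W = 0"
  by (simp add: complex_eq_iff blf algebra_simps)
lemma cform_rzero: "cform B W 0 = 0"
  by (simp add: complex_eq_iff blf algebra_simps)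
lemma cform_lsmult: "cform B (a *s U) W = a * cform B U W"
  by (simp add: complex_eq_iff blf algebra_simps)
lemma cform_rsmult: "cform B W (a *s U) = a * cform B W U"
  by (simp add: complex_eq_iff blf algebra_simps)
lemma cform_cnj: "cnj (cform B U W) = cform B (vcnj U) (vcnj W)"
  by (simp add: complex_eq_iff blf algebra_simps)
lemma cform_lsum: "cform B (sum f A) W = (\<Sum>a\<in>A. cform B (f a) W)"
  by (induction A rule: infinite_finite_induct) (auto simp: cform_lzero cform_ladd)
lemma cform_rsum: "cform B W (sum f A) = (\<Sum>a\<in>A. cform B W (f a))"
  by (induction A rule: infinite_finite_induct) (auto simp: cform_rzero cform_radd)
lemmas cform_simps = cform_ladd cform_radd cform_lsub cform_rsub cform_lneg cform_rneg
  cform_lzero cform_rzero cform_lsmult cform_rsmult cform_lsum cform_rsum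
end

context fixes A :: "real^'n \<Rightarrow> real^'n" assumes lA: "linear A"
begin
lemmas lins = linear_add[OF lA] linear_diff[OF lA] linear_neg[OF lA] linear_0[OF lA] linear_scale[OF lA]
lemma cext1_add: "cext1 A (U + V) = cext1 A U + cext1 A V" by (simp add: cvec_eq lins)
lemma cext1_sub: "cext1 A (U - V) = cext1 A U - cext1 A V" by (simp add: cvec_eq lins)
lemma cext1_neg: "cext1 A (- U) = - cext1 A U" by (simp add: cvec_eq lins)
lemma cext1_zero: "cext1 A 0 = 0" by (simp add: cvec_eq lins)
lemma cext1_smult: "cext1 A (a *s U) = a *s cext1 A U" by (simp add: cvec_eq lins)
lemma cext1_vcnj: "vcnj (cext1 A U) = cext1 A (vcnj U)" by (simp add: cvec_eq lins)
lemma cext1_sum: "cext1 A (sum f S) = (\<Sum>a\<in>S. cext1 A (f a))"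
  by (induction S rule: infinite_finite_induct) (auto simp: cext1_zero cext1_add)
lemmas cext1_simps = cext1_add cext1_sub cext1_neg cext1_zero cext1_smult cext1_sum
end

locale hs =
  fixes \<mu> :: "real^'n \<Rightarrow> real^'n \<Rightarrow> real^'n" and J :: "real^'n \<Rightarrow> real^'n"
    and g :: "real^'n \<Rightarrow> real^'n \<Rightarrow> real" and L :: "real^'n \<Rightarrow> real^'n \<Rightarrow> real^'n"
  assumes A1: "lie_algebra \<mu>" and A2: "two_step_nilpotent \<mu>" and A3: "complex_structure J"
    and A4: "integrable_cs J \<mu>" and A5: "\<forall>x y. J (\<mu> x y) \<in> center \<mu>"
    and H: "hermitian_metric J g" and C: "chern_connection J \<mu> g L"
begin

lemma bmu: "bilinear \<mu>" using A1 by (simp add: lie_algebra_def)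
lemma alt: "\<mu> x x = 0" using A1 by (simp add: lie_algebra_def)
lemma anti: "\<mu> x y = - \<mu> y x"
proof -
  have "\<mu> (x+y) (x+y) = 0" by (rule alt)
  moreover have "\<mu> (x+y) (x+y) = \<mu> x x + \<mu> x y + (\<mu> y x + \<mu> y y)"
    by (simp add: bilinear_ladd[OF bmu] bilinear_radd[OF bmu])
  ultimately have "\<mu> x y + \<mu> y x = 0" by (simp add: alt)
  then show ?thesis by (simp add: eq_neg_iff_add_eq_0)
qed
lemma nil: "\<mu> (\<mu> x y) z = 0" using A2 by (simp add: two_step_nilpotent_def)
lemma cenJ: "\<mu> (J (\<mu> x y)) z = 0" using A5 by (simp add: center_def)
lemma linJ: "linear J" using A3 by (simp add: complex_structure_def)
lemma JJ[simp]: "J (J x) = - x" using A3 by (simp add: complex_structure_def)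
lemma integ: "\<mu> (J x) (J y) - J (\<mu> (J x) y) - J (\<mu> x (J y)) - \<mu> x y = 0"
  using A4 by (simp add: integrable_cs_def)
lemma bg: "bilinear g" using H by (simp add: hermitian_metric_def)
lemma gsym: "g x y = g y x" using H by (simp add: hermitian_metric_def)
lemma gpos: "x \<noteq> 0 \<Longrightarrow> g x x > 0" using H by (simp add: hermitian_metric_def)
lemma gJ[simp]: "g (J x) (J y) = g x y" using H by (simp add: hermitian_metric_def)
lemma bL: "bilinear L" using C by (simp add: chern_connection_def)
lemma metr: "g (L x y) z + g y (L x z) = 0" using C by (simp add: chern_connection_def)
lemma LJ: "L x (J y) = J (L x y)" using C by (simp add: chern_connection_def)
lemma tors: "Z \<in> T10 J \<Longrightarrow> W \<in> T10 J \<Longrightarrow> torC L \<mu> Z (vcnj W) = 0"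
  using C by (simp add: chern_connection_def)

lemmas mus = bls[OF bmu]
lemmas Ls = bls[OF bL]
lemmas gs = blf[OF bg]
lemmas Js = lins[OF linJ]

abbreviation "Jc \<equiv> cext1 J"
abbreviation "nb \<equiv> cext2 L"
abbreviation "br \<equiv> cext2 \<mu>"
abbreviation "P \<equiv> cform g"
abbreviation "cj \<equiv> vcnj"
definition "pp U = (1/2) *s (U - \<i> *s Jc U)"
definition "pm U = (1/2) *s (U + \<i> *s Jc U)"

lemmas nbs = cext2_simps[OF bL]
lemmas brs = cext2_simps[OF bmu]
lemmas Ps = cform_simps[OF bg]
lemmas Jcs = cext1_simps[OF linJ]

lemma T10_iff: "Z \<in> T10 J \<longleftrightarrow> vim Z = - J (vre Z)"
  unfolding T10_def cvec_eq by (auto simp: Js)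

lemma T01_iff: "cj Z \<in> T10 J \<longleftrightarrow> vim Z = J (vre Z)"
  unfolding T10_iff by auto

lemma JcJc[simp]: "Jc (Jc U) = - U" by (simp add: cvec_eq)
lemma P_sym: "P U W = P W U" by (simp add: complex_eq_iff gsym)
lemma P_cnj: "cnj (P U W) = P (cj U) (cj W)" by (rule cform_cnj[OF bg])
lemma P_J: "P (Jc U) (Jc W) = P U W" by (simp add: complex_eq_iff)
lemma Jc_T10: "Z \<in> T10 J \<Longrightarrow> Jc Z = \<i> *s Z" by (simp add: T10_def)
lemma Jc_T01: "cj Z \<in> T10 J \<Longrightarrow> Jc Z = - \<i> *s Z" by (simp add: cvec_eq T01_iff Js)
lemma P_T10: assumes "Z \<in> T10 J" "W \<in> T10 J" shows "P Z W = 0"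
proof -
  have "P Z W = P (Jc Z) (Jc W)" by (simp add: P_J)
  also have "\<dots> = - P Z W" using assms by (simp add: Jc_T10 Ps)
  finally show ?thesis by simp
qed
lemma P_T01: assumes "cj Z \<in> T10 J" "cj W \<in> T10 J" shows "P Z W = 0"
  using P_T10[OF assms] by (metis P_cnj complex_cnj_zero_iff vcnj_vcnj)

lemma T10_smult: "Z \<in> T10 J \<Longrightarrow> a *s Z \<in> T10 J" by (simp add: T10_def Jcs)
lemma T10_add: "Z \<in> T10 J \<Longrightarrow> W \<in> T10 J \<Longrightarrow> Z + W \<in> T10 J" by (simp add: T10_def Jcs smult_add_r)
lemma T10_zero: "0 \<in> T10 J" by (simp add: T10_def Jcs)
lemma T10_sum: "(\<And>a. a \<in> S \<Longrightarrow> f a \<in> T10 J) \<Longrightarrow> sum f S \<in> T10 J"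
  by (induction S rule: infinite_finite_induct) (auto simp: T10_zero T10_add)

lemma pp_T10: "pp U \<in> T10 J" by (simp add: T10_iff pp_def Js scaleR_add_right scaleR_diff_right)
lemma pm_T01: "cj (pm U) \<in> T10 J" by (simp add: T10_iff pm_def Js scaleR_add_right scaleR_diff_right)
lemma pp_pm: "pp U + pm U = U"
proof -
  have "pp U + pm U = (1/2) *s ((U - \<i> *s Jc U) + (U + \<i> *s Jc U))"
    unfolding pp_def pm_def smult_add_r ..
  also have "\<dots> = U" by (simp only: cvec_eq vre_smult vim_smult vre_add vim_add vre_diff vim_diff) simp
  finally show ?thesis .
qed
lemma pp_id: "U \<in> T10 J \<Longrightarrow> pp U = U" by (simp add: cvec_eq pp_def T10_iff Js scaleR_add_right scaleR_diff_right)
lemma pm_T10: "U \<in> T10 J \<Longrightarrow> pm U = 0" by (simp add: cvec_eq pm_def T10_iff Js scaleR_add_right scaleR_diff_right)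
lemma pm_id: "cj U \<in> T10 J \<Longrightarrow> pm U = U" by (simp add: cvec_eq pm_def T01_iff Js scaleR_add_right scaleR_diff_right)
lemma pp_T01: "cj U \<in> T10 J \<Longrightarrow> pp U = 0" by (simp add: cvec_eq pp_def T01_iff Js scaleR_add_right scaleR_diff_right)
lemma cj_pp: "cj (pp U) = pm (cj U)" by (simp add: cvec_eq pp_def pm_def Js scaleR_add_right scaleR_diff_right)
lemma cj_pm: "cj (pm U) = pp (cj U)" by (simp add: cvec_eq pp_def pm_def Js scaleR_add_right scaleR_diff_right)
lemma pp_zero[simp]: "pp 0 = 0" by (simp add: cvec_eq pp_def Js)
lemma pm_zero[simp]: "pm 0 = 0" by (simp add: cvec_eq pm_def Js)

lemma nb_J: "nb U (Jc W) = Jc (nb U W)" by (simp add: cvec_eq LJ Ls Js)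
lemma nb_T10: "W \<in> T10 J \<Longrightarrow> nb U W \<in> T10 J"
  by (simp add: T10_def nb_J[symmetric] nbs)
lemma nb_T01: "cj W \<in> T10 J \<Longrightarrow> cj (nb U W) \<in> T10 J"
  by (simp add: cext2_vcnj[OF bL] nb_T10)
lemma nb_cj: "cj (nb U W) = nb (cj U) (cj W)" by (rule cext2_vcnj[OF bL])
lemma br_cj: "cj (br U W) = br (cj U) (cj W)" by (rule cext2_vcnj[OF bmu])
lemma metr': "g (L x y) z = - g y (L x z)" using metr[of x y z] by (simp add: eq_neg_iff_add_eq_0)
lemma P_metric: "P (nb U V) W + P V (nb U W) = 0"
  by (simp add: complex_eq_iff gs metr')
lemma br_anti: "br U W = - br W U"
  by (simp add: cvec_eq mus anti[of "vre U"] anti[of "vim U"] algebra_simps)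


lemma pp_add: "pp (U + W) = pp U + pp W" by (simp add: cvec_eq pp_def Js scaleR_add_right scaleR_diff_right)
lemma pp_diff: "pp (U - W) = pp U - pp W" by (simp add: cvec_eq pp_def Js scaleR_add_right scaleR_diff_right)
lemma pp_neg: "pp (- U) = - pp U" by (simp add: cvec_eq pp_def Js scaleR_add_right scaleR_diff_right)
lemma pp_smult: "pp (a *s U) = a *s pp U" by (simp add: cvec_eq pp_def Js scaleR_add_right scaleR_diff_right algebra_simps)
lemma pm_add: "pm (U + W) = pm U + pm W" by (simp add: cvec_eq pm_def Js scaleR_add_right scaleR_diff_right)
lemma pm_diff: "pm (U - W) = pm U - pm W" by (simp add: cvec_eq pm_def Js scaleR_add_right scaleR_diff_right)
lemma pm_neg: "pm (- U) = - pm U" by (simp add: cvec_eq pm_def Js scaleR_add_right scaleR_diff_right)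
lemma pm_smult: "pm (a *s U) = a *s pm U" by (simp add: cvec_eq pm_def Js scaleR_add_right scaleR_diff_right algebra_simps)

lemma tors': "Z \<in> T10 J \<Longrightarrow> W \<in> T10 J \<Longrightarrow> nb Z (cj W) - nb (cj W) Z - br Z (cj W) = 0"
  using tors by (simp add: torC_def)

lemma C1: assumes "Z \<in> T10 J" "W \<in> T10 J" shows "nb (cj W) Z = pp (br (cj W) Z)"
proof -
  have "pp (nb Z (cj W) - nb (cj W) Z - br Z (cj W)) = 0" using tors'[OF assms] by simp
  moreover have "pp (nb Z (cj W)) = 0" by (rule pp_T01) (simp add: nb_T01 assms)
  moreover have "pp (nb (cj W) Z) = nb (cj W) Z" by (rule pp_id) (simp add: nb_T10 assms)
  ultimately have "nb (cj W) Z = - pp (br Z (cj W))" by (simp add: pp_diff) (metis minus_minus)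
  also have "\<dots> = pp (br (cj W) Z)" by (subst br_anti) (simp add: pp_neg)
  finally show ?thesis .
qed

lemma C1': assumes "Z \<in> T10 J" "W \<in> T10 J" shows "nb W (cj Z) = pm (br W (cj Z))"
proof -
  have "cj (nb (cj W) Z) = cj (pp (br (cj W) Z))" using C1[OF assms] by simp
  then show ?thesis by (simp add: nb_cj br_cj cj_pp)
qed

definition "CS = {w. (\<forall>x. \<mu> w x = 0) \<and> (\<forall>x. \<mu> (J w) x = 0)}"
definition "cc U \<longleftrightarrow> vre U \<in> CS \<and> vim U \<in> CS"

lemma CS_add: "a \<in> CS \<Longrightarrow> b \<in> CS \<Longrightarrow> a + b \<in> CS" by (simp add: CS_def mus Js)
lemma CS_diff: "a \<in> CS \<Longrightarrow> b \<in> CS \<Longrightarrow> a - b \<in> CS" by (simp add: CS_def mus Js)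
lemma CS_neg: "a \<in> CS \<Longrightarrow> - a \<in> CS" by (simp add: CS_def mus Js)
lemma CS_scale: "a \<in> CS \<Longrightarrow> c *\<^sub>R a \<in> CS" by (simp add: CS_def mus Js)
lemma CS_zero: "0 \<in> CS" by (simp add: CS_def mus Js)
lemma CS_J: "a \<in> CS \<Longrightarrow> J a \<in> CS" by (simp add: CS_def mus Js)
lemma CS_mu: "\<mu> a b \<in> CS" by (simp add: CS_def nil cenJ)
lemma CS_cen: "a \<in> CS \<Longrightarrow> \<mu> a x = 0" by (simp add: CS_def)
lemma CS_cen2: "a \<in> CS \<Longrightarrow> \<mu> x a = 0" by (metis CS_cen anti neg_equal_0_iff_equal)
lemmas CS_intros = CS_add CS_diff CS_neg CS_scale CS_zero CS_J CS_mu

lemma cc_br: "cc (br U W)" by (simp add: cc_def CS_intros)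
lemma cc_pp: "cc U \<Longrightarrow> cc (pp U)" by (simp add: cc_def pp_def CS_intros)
lemma cc_pm: "cc U \<Longrightarrow> cc (pm U)" by (simp add: cc_def pm_def CS_intros)
lemma cc_cj: "cc U \<Longrightarrow> cc (cj U)" by (simp add: cc_def CS_intros)
lemma cc_zero: "cc 0" by (simp add: cc_def CS_intros)
lemma cc_lz: "cc U \<Longrightarrow> br U W = 0" by (simp add: cvec_eq cc_def CS_cen)
lemma cc_rz: "cc U \<Longrightarrow> br W U = 0" by (simp add: cvec_eq cc_def CS_cen2)

lemma integ_T10: assumes "Z \<in> T10 J" "W \<in> T10 J" shows "br Z W \<in> T10 J"
proof -
  define z w where "z = vre Z" and "w = vre W"
  have Z: "vim Z = - J z" and W: "vim W = - J w" using assms by (auto simp: T10_iff z_def w_def)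
  have "J (\<mu> (J z) (J w) - J (\<mu> (J z) w) - J (\<mu> z (J w)) - \<mu> z w) = 0" using integ by (simp add: Js)
  then have e: "J (\<mu> (J z) (J w)) + \<mu> (J z) w + \<mu> z (J w) - J (\<mu> z w) = 0" by (simp add: Js)
  show ?thesis unfolding T10_iff using e
    by (simp add: Z W z_def[symmetric] w_def[symmetric] mus Js algebra_simps)
qed

end

context hs begin
lemma herm_T10: assumes "Z \<in> T10 J" "W \<in> T10 J"
  shows "Re (P Z (cj W)) = 2 * g (vre Z) (vre W)" "Im (P Z (cj W)) = 2 * g (vre Z) (J (vre W))"
proof -
  have Z: "vim Z = - J (vre Z)" and W: "vim W = - J (vre W)" using assms by (auto simp: T10_iff)
  have "g (J (vre Z)) (vre W) = g (J (J (vre Z))) (J (vre W))" by (rule gJ[symmetric])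
  then have "g (J (vre Z)) (vre W) = - g (vre Z) (J (vre W))" by (simp add: gs)
  then show "Re (P Z (cj W)) = 2 * g (vre Z) (vre W)" "Im (P Z (cj W)) = 2 * g (vre Z) (J (vre W))"
    by (simp_all add: Z W gs)
qed

lemma P_norm: "P U (cj U) = complex_of_real (g (vre U) (vre U) + g (vim U) (vim U))"
  by (simp add: complex_eq_iff gs gsym[of "vim U" "vre U"])

lemma g_nonneg: "g x x \<ge> 0" by (metis gpos gs(10) less_eq_real_def order_refl)

lemma P_norm_zero: "P U (cj U) = 0 \<Longrightarrow> U = 0"
proof -
  assume "P U (cj U) = 0"
  then have "g (vre U) (vre U) + g (vim U) (vim U) = 0" unfolding P_norm of_real_eq_0_iff .
  then have "g (vre U) (vre U) = 0" "g (vim U) (vim U) = 0"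
    using g_nonneg[of "vre U"] g_nonneg[of "vim U"] by linarith+
  then have "vre U = 0" "vim U = 0" using gpos by (metis less_irrefl)+
  then show "U = 0" by (simp add: cvec_eq)
qed
end

locale hsf = hs \<mu> J g L for \<mu> :: "real^'n \<Rightarrow> real^'n \<Rightarrow> real^'n" and J g L +
  fixes m :: nat and F
  assumes UF: "unitary_frame J g m F"
begin

lemma dimm: "2 * m = CARD('n)" using UF by (simp add: unitary_frame_def)
lemma F_T10: "s < m \<Longrightarrow> F s \<in> T10 J" using UF by (simp add: unitary_frame_def)
lemma F_orth: "s < m \<Longrightarrow> r < m \<Longrightarrow> P (F s) (cj (F r)) = (if s = r then 1 else 0)"
  using UF by (simp add: unitary_frame_def)

definition "e s = vre (F s)"

lemma e_orth: "s < m \<Longrightarrow> r < m \<Longrightarrow> g (e s) (e r) = (if s = r then 1/2 else 0)"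
  using herm_T10(1)[OF F_T10 F_T10, of s r] F_orth[of s r] unfolding e_def
  by (auto split: if_splits)
lemma e_orthJ: "s < m \<Longrightarrow> r < m \<Longrightarrow> g (e s) (J (e r)) = 0"
  using herm_T10(2)[OF F_T10 F_T10, of s r] F_orth[of s r] unfolding e_def
  by (auto split: if_splits)


lemma gJsw: "g (J a) b = - g a (J b)"
proof -
  have "g (J a) b = g (J (J a)) (J b)" by (rule gJ[symmetric])
  then show ?thesis by (simp add: gs)
qed

definition "E = e ` {..<m} \<union> (\<lambda>s. J (e s)) ` {..<m}"

lemma E_orth: "v \<in> E \<Longrightarrow> w \<in> E \<Longrightarrow> v \<noteq> w \<Longrightarrow> g w v = 0"
  unfolding E_def
  by (auto simp: e_orth e_orthJ gJsw gs gsym[of "J _" "e _"] split: if_splits)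
lemma E_self: "v \<in> E \<Longrightarrow> g v v = 1/2"
  unfolding E_def by (auto simp: e_orth)

lemma E_fin: "finite E" by (simp add: E_def)

lemma E_card: "card E = 2 * m"
proof -
  have i1: "inj_on e {..<m}"
  proof (rule inj_onI)
    fix s r assume s: "s \<in> {..<m}" and r: "r \<in> {..<m}" and er: "e s = e r"
    have "g (e s) (e r) = 1/2" using e_orth[of s s] s by (simp add: er)
    then show "s = r" using e_orth[of s r] s r by (auto split: if_splits)
  qed
  have i2: "inj_on (\<lambda>s. J (e s)) {..<m}"
  proof (rule inj_onI)
    fix s r assume s: "s \<in> {..<m}" and r: "r \<in> {..<m}" and er: "J (e s) = J (e r)"
    then have "J (J (e s)) = J (J (e r))" by simp
    then have er: "e s = e r" by simp
    have "g (e s) (e r) = 1/2" using e_orth[of s s] s by (simp add: er)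
    then show "s = r" using e_orth[of s r] s r by (auto split: if_splits)
  qed
  have d: "e ` {..<m} \<inter> (\<lambda>s. J (e s)) ` {..<m} = {}"
  proof (rule ccontr)
    assume "e ` {..<m} \<inter> (\<lambda>s. J (e s)) ` {..<m} \<noteq> {}"
    then obtain s r where s: "s < m" and r: "r < m" and er: "e s = J (e r)" by auto
    have "g (e s) (e s) = 1/2" using e_orth[of s s] s by simp
    moreover have "g (e s) (J (e r)) = 0" using e_orthJ s r by simp
    ultimately show False using er by simp
  qed
  show ?thesis unfolding E_def
    by (simp add: card_Un_disjoint d card_image i1 i2)
qed

lemma E_indep: "independent E"
  unfolding independent_explicit
proof (intro conjI allI impI ballI)
  show "finite E" by (rule E_fin)
  fix c w assume sum0: "(\<Sum>v\<in>E. c v *\<^sub>R v) = 0" and wE: "w \<in> E"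
  have "0 = g w (\<Sum>v\<in>E. c v *\<^sub>R v)" by (simp add: sum0 gs)
  also have "\<dots> = (\<Sum>v\<in>E. c v * g w v)"
  proof -
    have "linear (g w)" using bg by (simp add: bilinear_def)
    then show ?thesis by (simp add: linear_sum gs)
  qed
  also have "\<dots> = c w * g w w + (\<Sum>v\<in>E - {w}. c v * g w v)"
    using wE E_fin by (simp add: sum.remove)
  also have "(\<Sum>v\<in>E - {w}. c v * g w v) = 0"
    using wE E_orth by (intro sum.neutral) auto
  finally show "c w = 0" using E_self[OF wE] by simp
qed

lemma kill: assumes "\<And>r. r < m \<Longrightarrow> g d (e r) = 0" "\<And>r. r < m \<Longrightarrow> g d (J (e r)) = 0"
  shows "d = 0"
proof -
  have "dim (UNIV :: (real^'n) set) \<le> card E" using E_card dimm by simp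
  then have "UNIV \<subseteq> span E" using card_ge_dim_independent[OF _ E_indep] by blast
  then have dE: "d \<in> span E" by blast
  have "g d d = 0"
    using dE
  proof (rule span_induct[where P="\<lambda>x. g d x = 0"])
    show "subspace {x. g d x = 0}" by (auto simp: subspace_def gs)
    show "\<And>x. x \<in> E \<Longrightarrow> g d x = 0" using assms unfolding E_def by auto
  qed
  then show "d = 0" using gpos by (metis less_irrefl)
qed


lemma T10_diff: "Z \<in> T10 J \<Longrightarrow> W \<in> T10 J \<Longrightarrow> Z - W \<in> T10 J"
  by (simp add: T10_def Jcs smult_diff_r)

lemma P_swap: "P X (cj Y) = cnj (P Y (cj X))" by (simp add: P_cnj P_sym)

lemma parseval: assumes U: "U \<in> T10 J" shows "U = (\<Sum>s<m. P U (cj (F s)) *s F s)"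
proof -
  define D where "D = U - (\<Sum>s<m. P U (cj (F s)) *s F s)"
  have DT: "D \<in> T10 J" unfolding D_def
    by (intro T10_diff U T10_sum T10_smult F_T10) auto
  have DP: "P D (cj (F r)) = 0" if r: "r < m" for r
  proof -
    have "P D (cj (F r)) = P U (cj (F r)) - (\<Sum>s<m. P U (cj (F s)) * P (F s) (cj (F r)))"
      by (simp add: D_def Ps)
    also have "(\<Sum>s<m. P U (cj (F s)) * P (F s) (cj (F r))) = (\<Sum>s<m. if s = r then P U (cj (F s)) else 0)"
      by (intro sum.cong) (auto simp: F_orth r)
    also have "\<dots> = P U (cj (F r))" using r by simp
    finally show ?thesis by simp
  qed
  define d where "d = vre D"
  have "d = 0"
  proof (rule kill)
    fix r assume r: "r < m"
    have "Re (P D (cj (F r))) = 2 * g d (e r)" "Im (P D (cj (F r))) = 2 * g d (J (e r))"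
      using herm_T10[OF DT F_T10[OF r]] by (simp_all add: d_def e_def)
    then show "g d (e r) = 0" "g d (J (e r)) = 0" using DP[OF r] by simp_all
  qed
  then have "D = 0" using DT by (simp add: cvec_eq T10_iff d_def Js)
  then show ?thesis by (simp add: D_def)
qed

lemma parseval_norm: assumes "A \<in> T10 J"
  shows "P A (cj A) = (\<Sum>s<m. P A (cj (F s)) * cnj (P A (cj (F s))))"
proof -
  have "P A (cj A) = P (\<Sum>s<m. P A (cj (F s)) *s F s) (cj A)" by (subst parseval[OF assms], rule refl)
  also have "\<dots> = (\<Sum>s<m. P A (cj (F s)) * P (F s) (cj A))" by (simp add: Ps)
  also have "\<dots> = (\<Sum>s<m. P A (cj (F s)) * cnj (P A (cj (F s))))"
    by (simp add: P_swap[of "F _"])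
  finally show ?thesis .
qed

end

context hs begin

lemma P_metric': "P (nb U V) W = - P V (nb U W)"
  using P_metric[of U V W] by (simp add: eq_neg_iff_add_eq_0)

lemma pm_as: "pm X = X - pp X" using pp_pm[of X] by (metis add_diff_cancel_left')

lemma P_pm_T10: "Z \<in> T10 J \<Longrightarrow> P Z (pm X) = P Z X"
  by (simp add: pm_as Ps P_T10 pp_T10)
lemma P_pp_T01: "cj W \<in> T10 J \<Longrightarrow> P (pp X) W = P X W"
proof -
  assume W: "cj W \<in> T10 J"
  have "P (pm X) W = 0" using P_T01[OF pm_T01 W] .
  then show ?thesis using pp_pm[of X] by (metis Ps(1) add.right_neutral)
qed

lemma tor_cj: "torC L \<mu> (cj X) (cj Y) = cj (torC L \<mu> X Y)"
  by (simp add: torC_def nb_cj br_cj)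

lemma curv_V0: assumes Z: "Z \<in> T10 J" and V: "V \<in> T10 J" and orth: "\<And>C. cc C \<Longrightarrow> P V C = 0"
  shows "P (curvC L \<mu> Z (cj Z) V) (cj V) = - P (pp (br (cj Z) V)) (cj (pp (br (cj Z) V)))"
proof -
  define A where "A = pp (br (cj Z) V)"
  have cjA: "cj A = pm (br Z (cj V))" by (simp add: A_def cj_pp br_cj)
  have i: "P (nb Z (nb (cj Z) V)) (cj V) = - P A (cj A)"
    by (simp add: P_metric' C1[OF V Z] C1'[OF V Z] A_def cj_pp br_cj)
  define B where "B = nb Z V"
  have BT: "B \<in> T10 J" by (simp add: B_def nb_T10 V)
  have "P B (cj B) = - P V (nb Z (cj B))" by (simp add: B_def P_metric')
  also have "nb Z (cj B) = pm (br Z (cj B))" by (rule C1'[OF BT Z])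
  also have "P V (pm (br Z (cj B))) = 0" by (intro orth cc_pm cc_br)
  finally have PB: "P B (cj B) = 0" by simp
  have ii: "P (nb (cj Z) (nb Z V)) (cj V) = 0"
    using PB by (simp add: P_metric' B_def nb_cj)
  define C where "C = br Z (cj Z)"
  have ccC: "cc C" by (simp add: C_def cc_br)
  have "nb C V = nb (pp C) V + nb (pm C) V" using pp_pm[of C] by (metis nbs(1))
  moreover have "nb (pm C) V = 0"
  proof -
    have W: "cj (pm C) \<in> T10 J" by (rule pm_T01)
    have "nb (cj (cj (pm C))) V = pp (br (cj (cj (pm C))) V)" by (rule C1[OF V W])
    then show ?thesis by (simp add: cc_lz cc_pm ccC)
  qed
  moreover have "P (nb (pp C) V) (cj V) = 0"
  proof -
    have "P (nb (pp C) V) (cj V) = - P V (nb (pp C) (cj V))" by (rule P_metric')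
    also have "nb (pp C) (cj V) = pm (br (pp C) (cj V))" by (rule C1'[OF V pp_T10])
    also have "br (pp C) (cj V) = 0" by (simp add: cc_lz cc_pp ccC)
    finally show ?thesis by (simp add: Ps)
  qed
  ultimately have iii: "P (nb C V) (cj V) = 0" by (simp add: Ps)
  show ?thesis unfolding curvC_def
    using i ii iii by (simp add: Ps C_def A_def)
qed


lemma tor_V0: assumes Zs: "Zs \<in> T10 J" and Zq: "Zq \<in> T10 J" and V: "V \<in> T10 J"
  and orth: "\<And>C. cc C \<Longrightarrow> P V C = 0"
  shows "P (torC L \<mu> Zs Zq) (cj V) = cnj (P (br (cj Zq) V) (cj Zs)) - cnj (P (br (cj Zs) V) (cj Zq))"
proof -
  have a: "P (nb A B) (cj V) = - cnj (P (br (cj A) V) (cj B))" if A: "A \<in> T10 J" and B: "B \<in> T10 J" for A B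
  proof -
    have "P (nb A B) (cj V) = - P B (nb A (cj V))" by (rule P_metric')
    also have "nb A (cj V) = pm (br A (cj V))" by (rule C1'[OF V A])
    also have "P B (pm (br A (cj V))) = P B (br A (cj V))" by (rule P_pm_T10[OF B])
    also have "\<dots> = cnj (P (br (cj A) V) (cj B))" by (simp add: P_cnj br_cj P_sym)
    finally show ?thesis .
  qed
  have b: "P (br Zs Zq) (cj V) = 0"
  proof -
    have "P (br Zs Zq) (cj V) = cnj (P V (br (cj Zs) (cj Zq)))" by (simp add: P_cnj br_cj P_sym)
    also have "P V (br (cj Zs) (cj Zq)) = 0" by (rule orth[OF cc_br])
    finally show ?thesis by simp
  qed
  show ?thesis unfolding torC_def using a[OF Zs Zq] a[OF Zq Zs] b by (simp add: Ps)
qed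

lemma curv_X: assumes Z: "Z \<in> T10 J" and X: "X \<in> T10 J" and ccX: "cc X"
  shows "P (curvC L \<mu> Z (cj Z) X) (cj X) = P (nb Z X) (cj (nb Z X))"
proof -
  have ccjX: "cc (cj X)" by (rule cc_cj[OF ccX])
  have i: "nb (cj Z) X = 0" using C1[OF X Z] by (simp add: cc_rz ccX)
  have ii: "P (nb (cj Z) (nb Z X)) (cj X) = - P (nb Z X) (cj (nb Z X))"
    by (simp add: P_metric' nb_cj)
  define C where "C = br Z (cj Z)"
  have "nb C X = nb (pp C) X + nb (pm C) X" using pp_pm[of C] by (metis nbs(1))
  moreover have "nb (pm C) X = 0"
  proof -
    have W: "cj (pm C) \<in> T10 J" by (rule pm_T01)
    have "nb (cj (cj (pm C))) X = pp (br (cj (cj (pm C))) X)" by (rule C1[OF X W])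
    then show ?thesis by (simp add: cc_rz ccX)
  qed
  moreover have "P (nb (pp C) X) (cj X) = 0"
  proof -
    have "P (nb (pp C) X) (cj X) = - P X (nb (pp C) (cj X))" by (rule P_metric')
    also have "nb (pp C) (cj X) = pm (br (pp C) (cj X))" by (rule C1'[OF X pp_T10])
    also have "br (pp C) (cj X) = 0" by (simp add: cc_rz ccjX)
    finally show ?thesis by (simp add: Ps)
  qed
  ultimately have iii: "P (nb C X) (cj X) = 0" by (simp add: Ps)
  show ?thesis unfolding curvC_def
    using i ii iii by (simp add: Ps C_def nbs)
qed

lemma tor_X: assumes Zs: "Zs \<in> T10 J" and Zq: "Zq \<in> T10 J" and X: "X \<in> T10 J" and ccX: "cc X"
  shows "P (torC L \<mu> Zs Zq) (cj X) = - P (br Zs Zq) (cj X)"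
proof -
  have a: "P (nb A B) (cj X) = 0" if A: "A \<in> T10 J" and B: "B \<in> T10 J" for A B
  proof -
    have "P (nb A B) (cj X) = - P B (nb A (cj X))" by (rule P_metric')
    also have "nb A (cj X) = pm (br A (cj X))" by (rule C1'[OF X A])
    also have "br A (cj X) = 0" by (simp add: cc_rz cc_cj ccX)
    finally show ?thesis by (simp add: Ps)
  qed
  show ?thesis unfolding torC_def using a[OF Zs Zq] a[OF Zq Zs] by (simp add: Ps)
qed

lemma B_zero: assumes Zs: "Zs \<in> T10 J" and Zq: "Zq \<in> T10 J" and X: "X \<in> T10 J"
  and B0: "nb Zs X = 0"
  shows "P X (br Zs (cj Zq)) = 0"
proof -
  have "P X (br Zs (cj Zq)) = P X (pm (br Zs (cj Zq)))" by (rule P_pm_T10[OF X, symmetric])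
  also have "pm (br Zs (cj Zq)) = nb Zs (cj Zq)" by (rule C1'[OF Zq Zs, symmetric])
  also have "P X (nb Zs (cj Zq)) = - P (nb Zs X) (cj Zq)" using P_metric'[of Zs X "cj Zq"] by simp
  finally show ?thesis using B0 by (simp add: Ps)
qed

end

context hsf begin

lemma Theta_V0: assumes V: "V \<in> T10 J" and orth: "\<And>C. cc C \<Longrightarrow> P V C = 0"
  shows "Theta g L \<mu> m F V V = 0"
proof -
  define \<beta> where "\<beta> s q = P (br (cj (F s)) V) (cj (F q))" for s q
  define N where "N = (\<Sum>s<m. \<Sum>q<m. \<beta> s q * cnj (\<beta> s q))"
  have Sterm: "P (curvC L \<mu> (F s) (cj (F s)) V) (cj V) = - (\<Sum>q<m. \<beta> s q * cnj (\<beta> s q))"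
    if s: "s < m" for s
  proof -
    have "P (curvC L \<mu> (F s) (cj (F s)) V) (cj V) = - P (pp (br (cj (F s)) V)) (cj (pp (br (cj (F s)) V)))"
      by (rule curv_V0[OF F_T10[OF s] V orth])
    also have "P (pp (br (cj (F s)) V)) (cj (pp (br (cj (F s)) V))) = (\<Sum>q<m. \<beta> s q * cnj (\<beta> s q))"
      unfolding parseval_norm[OF pp_T10] \<beta>_def
      by (intro sum.cong refl) (simp add: P_pp_T01 F_T10)
    finally show ?thesis .
  qed
  have S: "chern_S g L \<mu> m F V V = - N"
    unfolding chern_S_def N_def by (simp add: Sterm sum_negf)
  have Qterm: "P (torC L \<mu> (F s) (F q)) (cj V) * P (torC L \<mu> (cj (F s)) (cj (F q))) V
     = cnj (\<beta> q s) * \<beta> q s + cnj (\<beta> s q) * \<beta> s q - cnj (\<beta> q s) * \<beta> s q - cnj (\<beta> s q) * \<beta> q s"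
    if s: "s < m" and q: "q < m" for s q
  proof -
    have t: "P (torC L \<mu> (F s) (F q)) (cj V) = cnj (\<beta> q s) - cnj (\<beta> s q)"
      unfolding \<beta>_def by (rule tor_V0[OF F_T10[OF s] F_T10[OF q] V orth])
    have "P (torC L \<mu> (cj (F s)) (cj (F q))) V = cnj (P (torC L \<mu> (F s) (F q)) (cj V))"
      by (simp add: tor_cj P_cnj)
    then have t2: "P (torC L \<mu> (cj (F s)) (cj (F q))) V = \<beta> q s - \<beta> s q" using t by simp
    show ?thesis unfolding t t2 by (simp add: algebra_simps)
  qed
  have K: "(\<Sum>s<m. \<beta> q s * cnj (\<beta> s q)) = 0" if q: "q < m" for q
  proof -
    define EE where "EE = br (cj (F q)) V"
    have "(\<Sum>s<m. \<beta> q s * cnj (\<beta> s q)) = (\<Sum>s<m. P (pp EE) (cj (F s)) * P (br (F s) (cj V)) (F q))"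
      unfolding \<beta>_def EE_def
      by (intro sum.cong refl) (simp add: P_pp_T01 F_T10 P_cnj br_cj)
    also have "\<dots> = P (br (\<Sum>s<m. P (pp EE) (cj (F s)) *s F s) (cj V)) (F q)"
      by (simp add: brs Ps)
    also have "(\<Sum>s<m. P (pp EE) (cj (F s)) *s F s) = pp EE" by (rule parseval[OF pp_T10, symmetric])
    also have "br (pp EE) (cj V) = 0" by (simp add: cc_lz cc_pp cc_br EE_def)
    finally show ?thesis by (simp add: Ps)
  qed
  have e1: "(\<Sum>s<m. \<Sum>q<m. cnj (\<beta> q s) * \<beta> q s) = N"
    unfolding N_def by (subst sum.swap) (simp add: mult.commute)
  have e2: "(\<Sum>s<m. \<Sum>q<m. cnj (\<beta> s q) * \<beta> s q) = N"
    unfolding N_def by (simp add: mult.commute)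
  have e4: "(\<Sum>s<m. \<Sum>q<m. cnj (\<beta> s q) * \<beta> q s) = 0"
    by (subst sum.swap) (simp add: K mult.commute)
  have e3: "(\<Sum>s<m. \<Sum>q<m. cnj (\<beta> q s) * \<beta> s q) = 0"
  proof -
    have "(\<Sum>s<m. \<Sum>q<m. cnj (\<beta> q s) * \<beta> s q) = cnj (\<Sum>s<m. \<Sum>q<m. cnj (\<beta> s q) * \<beta> q s)"
      by (simp add: mult.commute)
    then show ?thesis using e4 by simp
  qed
  have Q: "chern_Q2 g L \<mu> m F V V = 2 * N"
  proof -
    have "chern_Q2 g L \<mu> m F V V = (\<Sum>s<m. \<Sum>q<m. cnj (\<beta> q s) * \<beta> q s + cnj (\<beta> s q) * \<beta> s q - cnj (\<beta> q s) * \<beta> s q - cnj (\<beta> s q) * \<beta> q s)"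
      unfolding chern_Q2_def by (intro sum.cong refl) (simp add: Qterm)
    also have "\<dots> = N + N - 0 - 0"
      by (simp add: sum.distrib sum_subtractf e1 e2 e3 e4)
    finally show ?thesis by simp
  qed
  show ?thesis unfolding Theta_def S Q by simp
qed

end

context hsf begin

lemma Theta_X_zero: assumes X: "X \<in> T10 J" and ccX: "cc X" and T0: "Theta g L \<mu> m F X X = 0"
  shows "\<And>s q. s < m \<Longrightarrow> q < m \<Longrightarrow> P (br (F s) (F q)) (cj X) = 0"
    and "\<And>s q. s < m \<Longrightarrow> q < m \<Longrightarrow> P X (br (F s) (cj (F q))) = 0"
proof -
  define nn where "nn U = g (vre U) (vre U) + g (vim U) (vim U)" for U
  have nn0: "nn U \<ge> 0" for U unfolding nn_def using g_nonneg by (simp add: add_nonneg_nonneg)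
  define \<tau> where "\<tau> s q = P (torC L \<mu> (F s) (F q)) (cj X)" for s q
  have S: "chern_S g L \<mu> m F X X = of_real (\<Sum>s<m. nn (nb (F s) X))"
    unfolding chern_S_def nn_def by (simp add: curv_X[OF F_T10 X ccX] P_norm)
  have Q: "chern_Q2 g L \<mu> m F X X = of_real (\<Sum>s<m. \<Sum>q<m. (cmod (\<tau> s q))^2)"
  proof -
    have "chern_Q2 g L \<mu> m F X X = (\<Sum>s<m. \<Sum>q<m. \<tau> s q * cnj (\<tau> s q))"
      unfolding chern_Q2_def \<tau>_def by (simp add: tor_cj P_cnj)
    also have "\<dots> = (\<Sum>s<m. \<Sum>q<m. of_real ((cmod (\<tau> s q))^2))"
      by (simp only: complex_norm_square)
    finally show ?thesis by simp
  qed
  have "Theta g L \<mu> m F X X = of_real ((\<Sum>s<m. nn (nb (F s) X)) + (\<Sum>s<m. \<Sum>q<m. (cmod (\<tau> s q))^2) / 2)"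
    unfolding Theta_def S Q by simp
  then have R: "(\<Sum>s<m. nn (nb (F s) X)) + (\<Sum>s<m. \<Sum>q<m. (cmod (\<tau> s q))^2) / 2 = 0"
    using T0 by (metis of_real_eq_0_iff)
  have a1: "(\<Sum>s<m. nn (nb (F s) X)) \<ge> 0" by (simp add: nn0 sum_nonneg)
  have a2: "(\<Sum>s<m. \<Sum>q<m. (cmod (\<tau> s q))^2) \<ge> 0" by (simp add: sum_nonneg)
  have z1: "(\<Sum>s<m. nn (nb (F s) X)) = 0" and z2: "(\<Sum>s<m. \<Sum>q<m. (cmod (\<tau> s q))^2) = 0"
    using R a1 a2 by linarith+
  have B0: "nb (F s) X = 0" if "s < m" for s
  proof -
    have "nn (nb (F s) X) = 0" using z1 that by (simp add: sum_nonneg_eq_0_iff nn0)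
    then have "P (nb (F s) X) (cj (nb (F s) X)) = 0" by (simp add: P_norm nn_def)
    then show ?thesis by (rule P_norm_zero)
  qed
  have t0: "\<tau> s q = 0" if "s < m" "q < m" for s q
  proof -
    have "(\<Sum>q<m. (cmod (\<tau> s q))^2) = 0" using z2 that by (simp add: sum_nonneg_eq_0_iff sum_nonneg)
    then show ?thesis using that by (simp add: sum_nonneg_eq_0_iff)
  qed
  show "\<And>s q. s < m \<Longrightarrow> q < m \<Longrightarrow> P (br (F s) (F q)) (cj X) = 0"
    using t0 tor_X[OF F_T10 F_T10 X ccX] unfolding \<tau>_def by fastforce
  show "\<And>s q. s < m \<Longrightarrow> q < m \<Longrightarrow> P X (br (F s) (cj (F q))) = 0"
    using B0 B_zero[OF F_T10 F_T10 X] by blast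
qed

lemma span_frame: "U = (\<Sum>s<m. P (pp U) (cj (F s)) *s F s) + (\<Sum>s<m. cnj (P (pp (cj U)) (cj (F s))) *s cj (F s))"
proof -
  have "pm U = cj (pp (cj U))" by (simp add: cj_pp)
  also have "pp (cj U) = (\<Sum>s<m. P (pp (cj U)) (cj (F s)) *s F s)" by (rule parseval[OF pp_T10])
  finally have "pm U = (\<Sum>s<m. cnj (P (pp (cj U)) (cj (F s))) *s cj (F s))" by simp
  moreover have "pp U = (\<Sum>s<m. P (pp U) (cj (F s)) *s F s)" by (rule parseval[OF pp_T10])
  ultimately show ?thesis using pp_pm[of U] by simp
qed

lemma expand_l: assumes "\<And>s. s < m \<Longrightarrow> P (br (F s) W) Y = 0" "\<And>s. s < m \<Longrightarrow> P (br (cj (F s)) W) Y = 0"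
  shows "P (br U W) Y = 0"
  apply (subst span_frame[of U])
  using assms by (simp add: brs Ps)

lemma expand_r: assumes "\<And>s. s < m \<Longrightarrow> P (br W (F s)) Y = 0" "\<And>s. s < m \<Longrightarrow> P (br W (cj (F s))) Y = 0"
  shows "P (br W U) Y = 0"
  apply (subst span_frame[of U])
  using assms by (simp add: brs Ps)

end

context hs begin

lemma CS_subspace: "subspace CS"
  unfolding subspace_def using CS_zero CS_add CS_scale by blast

lemma exists_orth: obtains v where "v \<noteq> 0" "\<And>w. w \<in> CS \<Longrightarrow> g v w = 0"
proof -
  obtain x0 y0 where xy: "\<mu> x0 y0 \<noteq> 0" using A2 by (auto simp: two_step_nilpotent_def)
  have "x0 \<notin> CS" using xy CS_cen by blast
  moreover have "span CS = CS" using CS_subspace by (simp add: span_eq_iff)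
  ultimately have "span CS \<noteq> UNIV" by (metis UNIV_I)
  then have "dim CS \<noteq> DIM(real^'n)" using dim_eq_full by blast
  moreover have "dim CS \<le> DIM(real^'n)" by (rule dim_subset_UNIV)
  ultimately have "dim CS < DIM(real^'n)" by simp
  then obtain u :: "real^'n" where u0: "u \<noteq> 0" and uo: "\<And>y. y \<in> span CS \<Longrightarrow> orthogonal u y"
    using orthogonal_to_subspace_exists by blast
  define G where "G v = (\<chi> i. g v (axis i 1))" for v :: "real^'n"
  have Gi: "g v w = G v \<bullet> w" for v w
  proof -
    have "g v w = g v (\<Sum>i\<in>UNIV. w $ i *\<^sub>R axis i 1)"
      by (simp add: basis_expansion[unfolded vector_scalar_mult_def] scalar_mult_eq_scaleR[symmetric] vector_scalar_mult_def)
    also have "\<dots> = (\<Sum>i\<in>UNIV. w $ i * g v (axis i 1))"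
    proof -
      have "linear (g v)" using bg by (simp add: bilinear_def)
      then show ?thesis by (simp add: linear_sum gs)
    qed
    also have "\<dots> = G v \<bullet> w" by (simp add: G_def inner_vec_def mult.commute)
    finally show ?thesis .
  qed
  have lG: "linear G"
    by (rule linearI) (simp_all add: G_def vec_eq_iff gs)
  have iG: "inj G"
  proof (rule injI)
    fix a b assume "G a = G b"
    then have "G (a - b) = 0" using lG by (simp add: linear_diff)
    then have "g (a - b) (a - b) = 0" by (simp add: Gi)
    then show "a = b" using gpos by (metis less_irrefl right_minus_eq)
  qed
  have "surj G" using linear_inj_imp_surj[OF lG iG] .
  then obtain v where v: "G v = u" by (metis surjD)
  have "v \<noteq> 0" using v u0 lG by (auto simp: linear_0)
  moreover have "g v w = 0" if "w \<in> CS" for w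
    using uo[of w] that v by (simp add: Gi orthogonal_def span_base)
  ultimately show ?thesis using that by blast
qed
end

context hsf begin

lemma main_contra:
  assumes eq: "\<forall>X\<in>T10 J. \<forall>Y\<in>T10 J. Theta g L \<mu> m F X Y = complex_of_real c * P X (cj Y)"
  shows False
proof -
  obtain v where v0: "v \<noteq> 0" and vo: "\<And>w. w \<in> CS \<Longrightarrow> g v w = 0" using exists_orth by blast
  define V where "V = cx v - \<i> *s cx (J v)"
  have VT: "V \<in> T10 J" by (simp add: T10_iff V_def)
  have orth: "P V C = 0" if "cc C" for C
  proof -
    have a: "vre C \<in> CS" "vim C \<in> CS" using that by (auto simp: cc_def)
    have "g v (vre C) = 0" "g v (vim C) = 0" "g v (J (vre C)) = 0" "g v (J (vim C)) = 0"
      using a by (auto intro!: vo CS_J)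
    then show ?thesis by (simp add: complex_eq_iff V_def gs gJsw)
  qed
  have "Theta g L \<mu> m F V V = 0" by (rule Theta_V0[OF VT orth])
  then have "complex_of_real c * P V (cj V) = 0" using eq VT by simp
  moreover have "P V (cj V) \<noteq> 0"
  proof
    assume "P V (cj V) = 0"
    then have "V = 0" by (rule P_norm_zero)
    then have "vre V = 0" by simp
    then show False using v0 by (simp add: V_def)
  qed
  ultimately have c0: "c = 0" by simp
  obtain a b where ab: "\<mu> a b \<noteq> 0" using A2 by (auto simp: two_step_nilpotent_def)
  define x where "x = \<mu> a b"
  define X where "X = cx x - \<i> *s cx (J x)"
  have XT: "X \<in> T10 J" by (simp add: T10_iff X_def)
  have ccX: "cc X" by (simp add: cc_def X_def x_def CS_intros)
  have "Theta g L \<mu> m F X X = 0" using eq XT c0 by simp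
  note Z = Theta_X_zero[OF XT ccX this]
  have f1: "P (br (F s) (F q)) (cj X) = 0" if "s < m" "q < m" for s q using Z(1) that .
  have f2: "P (br (cj (F s)) (cj (F q))) (cj X) = 0" if "s < m" "q < m" for s q
  proof -
    have "P (br (cj (F s)) (cj (F q))) (cj X) = cnj (P (br (F s) (F q)) X)"
      by (simp add: P_cnj br_cj)
    also have "P (br (F s) (F q)) X = 0" using that by (intro P_T10 integ_T10 F_T10 XT)
    finally show ?thesis by simp
  qed
  have f3: "P (br (F s) (cj (F q))) (cj X) = 0" if "s < m" "q < m" for s q
  proof -
    have "P (br (F s) (cj (F q))) (cj X) = cnj (P X (br (cj (F s)) (F q)))"
      by (simp add: P_cnj br_cj P_sym)
    also have "br (cj (F s)) (F q) = - br (F q) (cj (F s))" by (rule br_anti)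
    also have "P X (- br (F q) (cj (F s))) = 0" using Z(2)[of q s] that by (simp add: Ps)
    finally show ?thesis by simp
  qed
  have f4: "P (br (cj (F s)) (F q)) (cj X) = 0" if "s < m" "q < m" for s q
  proof -
    have "br (cj (F s)) (F q) = - br (F q) (cj (F s))" by (rule br_anti)
    then show ?thesis using f3[of q s] that by (simp add: Ps)
  qed
  have all: "P (br U W) (cj X) = 0" for U W
  proof (rule expand_l)
    fix s assume s: "s < m"
    show "P (br (F s) W) (cj X) = 0" by (rule expand_r) (use f1 f3 s in auto)
    show "P (br (cj (F s)) W) (cj X) = 0" by (rule expand_r) (use f2 f4 s in auto)
  qed
  have "P (br (cx a) (cx b)) (cj X) = P (cx x) (cj X)" by (simp add: cext2_cx[OF bmu] x_def)
  then have "P (cx x) (cj X) = 0" using all by simp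
  then have "Re (P (cx x) (cj X)) = 0" by simp
  then have "g x x = 0" by (simp add: X_def gs)
  then show False using gpos ab x_def by (metis less_irrefl)
qed

end

theorem proposition4p1:
  fixes \<mu> :: "real^'n \<Rightarrow> real^'n \<Rightarrow> real^'n" and J :: "real^'n \<Rightarrow> real^'n"
  assumes "lie_algebra \<mu>"
    and "two_step_nilpotent \<mu>"
    and "complex_structure J"
    and "integrable_cs J \<mu>"
    and "\<forall>x y. J (\<mu> x y) \<in> center \<mu>"
  shows "\<not> (\<exists>g. hcf_plus_static J \<mu> g)"
proof
  assume "\<exists>g. hcf_plus_static J \<mu> g"
  then obtain g where "hcf_plus_static J \<mu> g" ..
  then obtain L m F c where herm: "hermitian_metric J g" and ch: "chern_connection J \<mu> g L"
    and uf: "unitary_frame J g m F"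
    and eq: "\<forall>X\<in>T10 J. \<forall>Y\<in>T10 J. Theta g L \<mu> m F X Y = complex_of_real c * cform g X (vcnj Y)"
    unfolding hcf_plus_static_def by blast
  interpret hsf \<mu> J g L m F
    by (unfold_locales) (use assms herm ch uf in auto)
  show False by (rule main_contra[OF eq])
qed

end
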